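(* Let $K$ be a field of characteristic $p>0$ such that $K/k$ is a finitely generated field extension, where $k=\bigcap_{n\ge0}K^{p^n}$. If $K\neq k$, then $\operatorname{Diff}_k(K)$ is not finitely generated as a $K$-algebra.
   Context: $\operatorname{Diff}_k(K)$ is the union over $n\ge0$ of the sets of $k$-linear maps $D:K\to K$ with $[b_0,[b_1,[\ldots,[b_n,D]\ldots]]]=0$ for all $b_i\in K$ (elements acting by multiplication, $[X,Y]=XY-YX$); it is a ring under composition containing $K$. *)

theory Defs
  imports Main
begin

text \<open>The field K is the whole type 'a. k = intersection over n of K^(p^n), p = CHAR('a).\<close>
definition perfect_core :: "'a::field set" where
  "perfect_core = (\<Inter>n. range (\<lambda>x::'a. x ^ (CHAR('a) ^ n)))"

definition subfield_gen :: "'a::field set \<Rightarrow> 'a set" where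
  "subfield_gen A = \<Inter>{F. A \<subseteq> F \<and> 0 \<in> F \<and> 1 \<in> F \<and>
      (\<forall>x\<in>F. \<forall>y\<in>F. x + y \<in> F \<and> x * y \<in> F) \<and>
      (\<forall>x\<in>F. - x \<in> F \<and> inverse x \<in> F)}"

definition fg_field_ext :: "'a::field set \<Rightarrow> bool" where
  "fg_field_ext k \<longleftrightarrow> (\<exists>S. finite S \<and> subfield_gen (k \<union> S) = UNIV)"

definition k_linear :: "'a::field set \<Rightarrow> ('a \<Rightarrow> 'a) \<Rightarrow> bool" where
  "k_linear k D \<longleftrightarrow> (\<forall>x y. D (x + y) = D x + D y) \<and> (\<forall>c\<in>k. \<forall>x. D (c * x) = c * D x)"

definition comm :: "'a::field \<Rightarrow> ('a \<Rightarrow> 'a) \<Rightarrow> ('a \<Rightarrow> 'a)" where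
  "comm b D = (\<lambda>x. b * D x - D (b * x))"

fun iter_comm :: "'a::field list \<Rightarrow> ('a \<Rightarrow> 'a) \<Rightarrow> ('a \<Rightarrow> 'a)" where
  "iter_comm [] D = D"
| "iter_comm (b # bs) D = comm b (iter_comm bs D)"

definition Diff :: "'a::field set \<Rightarrow> ('a \<Rightarrow> 'a) set" where
  "Diff k = {D. k_linear k D \<and>
     (\<exists>n::nat. \<forall>bs. length bs = Suc n \<longrightarrow> iter_comm bs D = (\<lambda>_. 0))}"

text \<open>Subring of (K \<Rightarrow> K, +, composition) generated by K (multiplication maps) and G,
  i.e. the K-subalgebra generated by G.\<close>
inductive_set K_alg_gen :: "('a::field \<Rightarrow> 'a) set \<Rightarrow> ('a \<Rightarrow> 'a) set" for G where
  scal: "(\<lambda>x. c * x) \<in> K_alg_gen G"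
| gen: "g \<in> G \<Longrightarrow> g \<in> K_alg_gen G"
| add: "f \<in> K_alg_gen G \<Longrightarrow> g \<in> K_alg_gen G \<Longrightarrow> (\<lambda>x. f x + g x) \<in> K_alg_gen G"
| comp: "f \<in> K_alg_gen G \<Longrightarrow> g \<in> K_alg_gen G \<Longrightarrow> f \<circ> g \<in> K_alg_gen G"

definition fg_K_algebra :: "('a::field \<Rightarrow> 'a) set \<Rightarrow> bool" where
  "fg_K_algebra A \<longleftrightarrow> (\<exists>G. finite G \<and> G \<subseteq> A \<and> K_alg_gen G = A)"

end

theory Submission
  imports Defs "HOL-Computational_Algebra.Primes" "HOL.Vector_Spaces"
begin


lemma iter_comm_append: "iter_comm (bs @ cs) X = iter_comm bs (iter_comm cs X)"
  by (induction bs) auto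

lemma iter_comm_zero: "iter_comm bs (\<lambda>_. 0) = (\<lambda>_. (0::'a::field))"
  by (induction bs) (auto simp: comm_def)

definition Ord :: "nat \<Rightarrow> ('a::field \<Rightarrow> 'a) \<Rightarrow> bool" where
  "Ord n X \<longleftrightarrow> (\<forall>bs. length bs = n \<longrightarrow> iter_comm bs X = (\<lambda>_. 0))"

lemma Ord_0: "Ord 0 X \<longleftrightarrow> X = (\<lambda>_. 0)"
  by (auto simp: Ord_def)

lemma Ord_Suc: "Ord (Suc n) X \<longleftrightarrow> (\<forall>b. Ord n (comm b X))"
proof
  assume "Ord (Suc n) X"
  then show "\<forall>b. Ord n (comm b X)"
    unfolding Ord_def
    by (metis iter_comm.simps iter_comm_append length_append_singleton)
next
  assume H: "\<forall>b. Ord n (comm b X)"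
  show "Ord (Suc n) X" unfolding Ord_def
  proof (intro allI impI)
    fix bs :: "'a list" assume "length bs = Suc n"
    then obtain cs b where "bs = cs @ [b]" "length cs = n"
      by (metis length_Suc_conv_rev)
    then show "iter_comm bs X = (\<lambda>_. 0)" using H
      by (simp add: iter_comm_append Ord_def)
  qed
qed

lemma Ord_mono: "Ord m X \<Longrightarrow> m \<le> k \<Longrightarrow> Ord k X"
  unfolding Ord_def
proof (intro allI impI)
  fix bs :: "'a list"
  assume H: "\<forall>bs. length bs = m \<longrightarrow> iter_comm bs X = (\<lambda>_. 0)" and mk: "m \<le> k" and l: "length bs = k"
  have "bs = take (k - m) bs @ drop (k - m) bs" by simp
  then have "iter_comm bs X = iter_comm (take (k - m) bs) (iter_comm (drop (k - m) bs) X)"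
    by (metis iter_comm_append)
  also have "iter_comm (drop (k - m) bs) X = (\<lambda>_. 0)" using H l mk by simp
  finally show "iter_comm bs X = (\<lambda>_. 0)" by (simp add: iter_comm_zero)
qed

lemma comm_comm: "comm b (comm c X) = comm c (comm b X)"
  by (auto simp: comm_def fun_eq_iff algebra_simps)

lemma Ord1_lin:
  assumes "Ord (Suc 0) D" shows "D (b * y) = b * D y"
proof -
  have "comm b D = (\<lambda>_. 0)" using assms by (simp add: Ord_Suc Ord_0)
  then show ?thesis by (auto simp: comm_def fun_eq_iff dest: fun_cong[of _ _ y])
qed

lemma Diff_pow_lin:
  fixes D :: "'a::field \<Rightarrow> 'a"
  assumes "CHAR('a) > 0" "Ord (Suc n) D"
  shows "D (c ^ (CHAR('a) ^ n) * y) = c ^ (CHAR('a) ^ n) * D y"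
  using assms(2)
proof (induction n arbitrary: D y)
  case 0
  then show ?case using Ord1_lin by simp
next
  case (Suc n)
  define p where "p = CHAR('a)"
  define c' where "c' = c ^ (p ^ n)"
  have IH: "comm b D (c' * y) = c' * comm b D y" for b y
    using Suc.IH[of "comm b D"] Suc.prems unfolding c'_def p_def by (simp add: Ord_Suc)
  define e where "e = c' * D 1 - D c'"
  have E: "D (c' * y) = c' * D y - e * y" for y
  proof -
    have "comm y D (c' * 1) = c' * comm y D 1" by (rule IH)
    then show ?thesis by (simp add: comm_def e_def algebra_simps)
  qed
  have P: "D (c' ^ Suc m * y) = c' ^ Suc m * D y - of_nat (Suc m) * e * c' ^ m * y" for m
  proof (induction m)
    case 0 then show ?case using E by simp
  next
    case (Suc m)
    have "D (c' ^ Suc (Suc m) * y) = D (c' * (c' ^ Suc m * y))" by (simp add: algebra_simps)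
    also have "\<dots> = c' * D (c' ^ Suc m * y) - e * (c' ^ Suc m * y)" by (rule E)
    also have "\<dots> = c' * (c' ^ Suc m * D y - of_nat (Suc m) * e * c' ^ m * y) - e * (c' ^ Suc m * y)"
      by (simp only: Suc)
    also have "\<dots> = c' ^ Suc (Suc m) * D y - of_nat (Suc (Suc m)) * e * c' ^ Suc m * y"
      by (simp add: algebra_simps)
    finally show ?case .
  qed
  have pp: "p > 0" using assms(1) p_def by simp
  have "D (c' ^ Suc (p - 1) * y) = c' ^ Suc (p - 1) * D y - of_nat (Suc (p - 1)) * e * c' ^ (p - 1) * y"
    by (rule P)
  moreover have "Suc (p - 1) = p" using pp by simp
  moreover have "c' ^ p = c ^ (p ^ Suc n)" unfolding c'_def by (simp add: power_mult[symmetric] mult.commute)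
  moreover have "of_nat p = (0::'a)" unfolding p_def by simp
  ultimately have "D (c' ^ p * y) = c' ^ p * D y" by (metis mult_zero_left diff_zero)
  then show ?case using \<open>c' ^ p = c ^ (p ^ Suc n)\<close> by (simp add: p_def)
qed



lemma comm_funpow:
  "(comm a ^^ m) X y = (\<Sum>j\<le>m. of_nat (m choose j) * (-1)^j * a^(m-j) * X (a^j * y))"
proof (induction m arbitrary: y)
  case 0 then show ?case by simp
next
  case (Suc m)
  define f where "f j = of_nat (Suc m choose j) * (-1)^j * a^(Suc m - j) * X (a^j * y)" for j
  have "(comm a ^^ Suc m) X y = a * (comm a ^^ m) X y - (comm a ^^ m) X (a * y)"
    by (simp add: comm_def)
  also have "(comm a ^^ m) X (a * y) = (\<Sum>j\<le>m. of_nat (m choose j) * (-1)^j * a^(m-j) * X (a^Suc j * y))"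
    by (simp add: Suc ac_simps)
  also have "a * (comm a ^^ m) X y = (\<Sum>j\<le>m. of_nat (m choose j) * (-1)^j * a^(Suc m-j) * X (a^j * y))"
    by (simp add: Suc sum_distrib_left algebra_simps Suc_diff_le)
  also have "\<dots> = (\<Sum>j\<le>Suc m. of_nat (m choose j) * (-1)^j * a^(Suc m-j) * X (a^j * y))"
    by (simp add: binomial_eq_0)
  also have "\<dots> = a^Suc m * X y + (\<Sum>j\<le>m. of_nat (m choose Suc j) * (-1)^Suc j * a^(m-j) * X (a^Suc j * y))"
    by (subst sum.atMost_Suc_shift) simp
  finally have "(comm a ^^ Suc m) X y = a^Suc m * X y +
     ((\<Sum>j\<le>m. of_nat (m choose Suc j) * (-1)^Suc j * a^(m-j) * X (a^Suc j * y))
     - (\<Sum>j\<le>m. of_nat (m choose j) * (-1)^j * a^(m-j) * X (a^Suc j * y)))"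
    by simp
  also have "(\<Sum>j\<le>m. of_nat (m choose Suc j) * (-1)^Suc j * a^(m-j) * X (a^Suc j * y))
     - (\<Sum>j\<le>m. of_nat (m choose j) * (-1)^j * a^(m-j) * X (a^Suc j * y)) =
     (\<Sum>j\<le>m. of_nat (Suc m choose Suc j) * (-1)^Suc j * a^(m-j) * X (a^Suc j * y))"
    unfolding sum_subtractf[symmetric] by (rule sum.cong) (simp_all add: algebra_simps)
  also have "a^Suc m * X y + (\<Sum>j\<le>m. of_nat (Suc m choose Suc j) * (-1)^Suc j * a^(m-j) * X (a^Suc j * y)) = (\<Sum>j\<le>Suc m. f j)"
    by (subst sum.atMost_Suc_shift) (simp add: f_def)
  finally show ?case by (simp add: f_def)
qed

lemma comm_funpow_CHAR:
  fixes X :: "'a::field \<Rightarrow> 'a"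
  assumes "CHAR('a) > 0"
  shows "(comm a ^^ CHAR('a)) X = comm (a ^ CHAR('a)) X"
proof
  fix y
  define p where "p = CHAR('a)"
  have pr: "prime p" unfolding p_def using assms by (simp add: prime_CHAR_semidom)
  have pp: "p > 0" using pr prime_gt_0_nat by blast
  have "(comm a ^^ p) X y = (\<Sum>j\<le>p. of_nat (p choose j) * (-1)^j * a^(p-j) * X (a^j * y))"
    by (rule comm_funpow)
  also have "\<dots> = (\<Sum>j\<in>{0,p}. of_nat (p choose j) * (-1)^j * a^(p-j) * X (a^j * y))"
  proof (intro sum.mono_neutral_right ballI)
    fix k assume "k \<in> {..p} - {0, p}"
    hence k: "k > 0" "k < p" by auto
    have "p dvd (p choose k)" by (rule dvd_choose_prime) (use k pr in auto)
    hence "of_nat (p choose k) = (0 :: 'a)" unfolding p_def using of_nat_eq_0_iff_char_dvd by blast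
    thus "of_nat (p choose k) * (-1)^k * a^(p-k) * X (a^k * y) = 0" by simp
  qed auto
  also have "\<dots> = a ^ p * X y + (-1) ^ p * X (a ^ p * y)" using pp by simp
  also have "(-1::'a) ^ p = - 1"
    using minus_power_prime_CHAR[where 'a='a, of p 1] pr p_def by simp
  finally have "(comm a ^^ p) X y = a ^ p * X y - X (a ^ p * y)" by simp
  then show "(comm a ^^ CHAR('a)) X y = comm (a ^ CHAR('a)) X y"
    by (simp add: comm_def[of "a ^ CHAR('a)"] p_def)
qed

lemma comm_funpow_CHAR_pow:
  fixes X :: "'a::field \<Rightarrow> 'a"
  assumes "CHAR('a) > 0"
  shows "(comm a ^^ (CHAR('a) ^ n)) X = comm (a ^ (CHAR('a) ^ n)) X"
proof (induction n arbitrary: X)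
  case 0 then show ?case by simp
next
  case (Suc n)
  have "(comm a ^^ (CHAR('a) ^ Suc n)) = (comm a ^^ (CHAR('a) ^ n)) ^^ CHAR('a)"
    by (simp add: funpow_mult mult.commute)
  also have "(comm a ^^ (CHAR('a) ^ n)) = comm (a ^ (CHAR('a) ^ n))"
    using Suc by auto
  finally show ?case using comm_funpow_CHAR[OF assms, of "a ^ (CHAR('a) ^ n)"]
    by (simp add: power_mult[symmetric] mult.commute)
qed



definition qlin :: "nat \<Rightarrow> ('a::field \<Rightarrow> 'a) \<Rightarrow> bool" where
  "qlin Q X \<longleftrightarrow> (\<forall>a y. X (a ^ Q * y) = a ^ Q * X y)"

definition addi :: "('a::field \<Rightarrow> 'a) \<Rightarrow> bool" where
  "addi X \<longleftrightarrow> (\<forall>x y. X (x + y) = X x + X y)"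

inductive_set Rgen :: "nat \<Rightarrow> 'a::field set \<Rightarrow> 'a set" for Q S where
  pw: "a ^ Q \<in> Rgen Q S"
| gn: "s \<in> S \<Longrightarrow> s \<in> Rgen Q S"
| ad: "x \<in> Rgen Q S \<Longrightarrow> y \<in> Rgen Q S \<Longrightarrow> x + y \<in> Rgen Q S"
| mu: "x \<in> Rgen Q S \<Longrightarrow> y \<in> Rgen Q S \<Longrightarrow> x * y \<in> Rgen Q S"

fun OG :: "'a::field set \<Rightarrow> nat \<Rightarrow> ('a \<Rightarrow> 'a) \<Rightarrow> bool" where
  "OG G 0 X = (X = (\<lambda>_. 0))"
| "OG G (Suc n) X = (\<forall>g\<in>G. OG G n (comm g X))"

lemma comm_zero: "comm b (\<lambda>_. 0) = (\<lambda>_. (0::'a::field))"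
  by (simp add: comm_def)

lemma OG_zero: "OG G n (\<lambda>_. 0)"
  by (induction n) (auto simp: comm_zero)

lemma funpow_comm_commute: "(comm h ^^ m) (comm g X) = comm g ((comm h ^^ m) X)"
  by (induction m) (auto simp: comm_comm)

lemma funpow_comm_zero: "(comm h ^^ m) (\<lambda>_. 0) = (\<lambda>_. (0::'a::field))"
  by (induction m) (auto simp: comm_zero)

lemma OG_budget:
  assumes "finite G" "G \<noteq> {}"
  shows "(\<forall>g\<in>G. (comm g ^^ k g) X = (\<lambda>_. 0)) \<Longrightarrow> sum k G \<le> n \<Longrightarrow> OG G n X"
proof (induction n arbitrary: X k)
  case 0
  then have "\<forall>g\<in>G. k g = 0" using assms(1) by simp
  moreover obtain g where "g \<in> G" using assms(2) by auto
  ultimately show ?case using 0 by force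
next
  case (Suc n)
  show ?case unfolding OG.simps
  proof
    fix g assume g: "g \<in> G"
    show "OG G n (comm g X)"
    proof (cases "k g = 0")
      case True
      then have "X = (\<lambda>_. 0)" using Suc.prems g by force
      then show ?thesis by (simp add: comm_zero OG_zero)
    next
      case False
      define k' where "k' = k(g := k g - 1)"
      have "sum k G = sum k' G + 1"
      proof -
        have "sum k G = k g + sum k (G - {g})" using g assms(1) by (simp add: sum.remove)
        moreover have "sum k' G = k' g + sum k' (G - {g})" using g assms(1) by (simp add: sum.remove)
        moreover have "sum k' (G - {g}) = sum k (G - {g})" by (rule sum.cong) (auto simp: k'_def)
        ultimately show ?thesis using False by (simp add: k'_def)
      qed
      then have s: "sum k' G \<le> n" using Suc.prems by simp
      have "\<forall>h\<in>G. (comm h ^^ k' h) (comm g X) = (\<lambda>_. 0)"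
      proof
        fix h assume h: "h \<in> G"
        show "(comm h ^^ k' h) (comm g X) = (\<lambda>_. 0)"
        proof (cases "h = g")
          case True
          have "(comm g ^^ (k g - 1)) (comm g X) = (comm g ^^ Suc (k g - 1)) X"
            by (simp add: funpow_Suc_right del: funpow.simps)
          also have "Suc (k g - 1) = k g" using False by simp
          finally show ?thesis using True Suc.prems g by (simp add: k'_def)
        next
          case False
          then show ?thesis using Suc.prems h
            by (simp add: k'_def funpow_comm_commute comm_zero)
        qed
      qed
      then show ?thesis using Suc.IH s by blast
    qed
  qed
qed

lemma iter_comm_add: "iter_comm bs (\<lambda>y. X y + Y y) = (\<lambda>y. iter_comm bs X y + iter_comm bs Y y)"
  by (induction bs) (auto simp: comm_def fun_eq_iff algebra_simps)

lemma iter_comm_lmul: "iter_comm bs (\<lambda>y. b * X y) = (\<lambda>y. b * iter_comm bs X y)"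
  by (induction bs) (auto simp: comm_def fun_eq_iff algebra_simps)

lemma iter_comm_rmul: "iter_comm bs (\<lambda>y. X (c * y)) = (\<lambda>y. iter_comm bs X (c * y))"
  by (induction bs) (auto simp: comm_def fun_eq_iff algebra_simps)

lemma Ord_add: "Ord n X \<Longrightarrow> Ord n Y \<Longrightarrow> Ord n (\<lambda>y. X y + Y y)"
  by (simp add: Ord_def iter_comm_add)

lemma Ord_lmul: "Ord n X \<Longrightarrow> Ord n (\<lambda>y. b * X y)"
  by (simp add: Ord_def iter_comm_lmul)

lemma Ord_rmul: "Ord n X \<Longrightarrow> Ord n (\<lambda>y. X (c * y))"
  by (simp add: Ord_def iter_comm_rmul)

lemma Ord_zero: "Ord n (\<lambda>_. 0)"
  by (simp add: Ord_def iter_comm_zero)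

lemma comm_add: "addi X \<Longrightarrow> comm (b + c) X = (\<lambda>y. comm b X y + comm c X y)"
  by (auto simp: addi_def comm_def fun_eq_iff algebra_simps)

lemma comm_mult: "comm (b * c) X = (\<lambda>y. b * comm c X y + comm b X (c * y))"
  by (auto simp: comm_def fun_eq_iff algebra_simps)

lemma comm_qlin: "qlin Q X \<Longrightarrow> comm (a ^ Q) X = (\<lambda>_. 0)"
  by (auto simp: qlin_def comm_def fun_eq_iff)

lemma qlin_comm: "qlin Q X \<Longrightarrow> qlin Q (comm b X)"
  unfolding qlin_def comm_def
proof (intro allI)
  fix a y assume H: "\<forall>a y. X (a ^ Q * y) = a ^ Q * X y"
  have "X (b * (a ^ Q * y)) = X (a ^ Q * (b * y))" by (simp add: ac_simps)
  also have "\<dots> = a ^ Q * X (b * y)" using H by blast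
  finally show "b * X (a ^ Q * y) - X (b * (a ^ Q * y)) = a ^ Q * (b * X y - X (b * y))"
    using H by (simp add: algebra_simps)
qed

lemma addi_comm: "addi X \<Longrightarrow> addi (comm b X)"
  by (auto simp: addi_def comm_def algebra_simps)

lemma OG_Ord:
  assumes R: "Rgen Q S = UNIV" and SG: "S \<subseteq> G"
  shows "addi X \<Longrightarrow> qlin Q X \<Longrightarrow> OG G n X \<Longrightarrow> Ord n X"
proof (induction n arbitrary: X)
  case 0 then show ?case by (simp add: Ord_0)
next
  case (Suc n)
  have "Ord n (comm b X)" if "b \<in> Rgen Q S" for b
    using that
  proof (induction b rule: Rgen.induct)
    case (pw a) then show ?case using Suc.prems by (simp add: comm_qlin Ord_zero)
  next
    case (gn s)
    then show ?case using Suc.prems Suc.IH[of "comm s X"] SG by (auto simp: addi_comm qlin_comm)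
  next
    case (ad x y) then show ?case using Suc.prems by (simp add: comm_add Ord_add)
  next
    case (mu x y) then show ?case by (simp add: comm_mult Ord_add Ord_lmul Ord_rmul)
  qed
  then show ?case using R by (simp add: Ord_Suc)
qed



lemma frob_add:
  assumes "CHAR('a::field) > 0"
  shows "((x::'a) + y) ^ (CHAR('a) ^ N) = x ^ (CHAR('a) ^ N) + y ^ (CHAR('a) ^ N)"
  using assms by (intro freshmans_dream') (auto simp: prime_CHAR_semidom)

lemma frob_neg:
  assumes "CHAR('a::field) > 0"
  shows "(- (x::'a)) ^ (CHAR('a) ^ N) = - (x ^ (CHAR('a) ^ N))"
proof -
  have z: "(x + - x) ^ (CHAR('a) ^ N) = 0" using assms by simp
  have h: "(x + - x) ^ (CHAR('a) ^ N) = x ^ (CHAR('a) ^ N) + (- x) ^ (CHAR('a) ^ N)"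
    by (rule frob_add[OF assms])
  have "x ^ (CHAR('a) ^ N) + (- x) ^ (CHAR('a) ^ N) = 0"
    using h z by metis
  then show ?thesis by (simp add: add_eq_0_iff)
qed

lemma frob_inj:
  assumes "CHAR('a::field) > 0" "(x::'a) ^ (CHAR('a) ^ N) = y ^ (CHAR('a) ^ N)"
  shows "x = y"
proof -
  have "((x - y) + y) ^ (CHAR('a) ^ N) = (x - y) ^ (CHAR('a) ^ N) + y ^ (CHAR('a) ^ N)"
    by (rule frob_add[OF assms(1)])
  then have "(x - y) ^ (CHAR('a) ^ N) = 0" using assms(2) by simp
  then show ?thesis by simp
qed

lemma Rgen_pow: "x \<in> Rgen Q S \<Longrightarrow> x ^ n \<in> Rgen Q S"
proof (induction n)
  case 0 then show ?case using Rgen.pw[of 1 Q S] by simp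
next
  case (Suc n) then show ?case using Rgen.mu by auto
qed

lemma Rgen_UNIV:
  fixes S :: "'a::field set"
  assumes ch: "CHAR('a) > 0" and Q: "Q = CHAR('a) ^ N"
    and kQ: "k \<subseteq> range (\<lambda>x. x ^ Q)" and gen: "subfield_gen (k \<union> S) = UNIV"
  shows "Rgen Q S = UNIV"
proof -
  have Qpos: "Q > 0" using ch Q by simp
  let ?F = "Rgen Q S"
  have f1: "k \<union> S \<subseteq> ?F" using kQ by (auto intro: Rgen.pw Rgen.gn)
  have f2: "0 \<in> ?F"
  proof -
    have "(0::'a) ^ Q = 0" using Qpos by simp
    then show ?thesis by (metis Rgen.pw)
  qed
  have f3: "1 \<in> ?F" using Rgen.pw[of 1 Q S] by simp
  have f4: "\<forall>x\<in>?F. \<forall>y\<in>?F. x + y \<in> ?F \<and> x * y \<in> ?F" by (auto intro: Rgen.ad Rgen.mu)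
  have f5: "\<forall>x\<in>?F. - x \<in> ?F \<and> inverse x \<in> ?F"
  proof
    fix x assume x: "x \<in> ?F"
    have "- 1 = (- 1 :: 'a) ^ Q" using frob_neg[OF ch, of 1 N] Q by simp
    then have "- 1 \<in> ?F" by (metis Rgen.pw)
    then have "(- 1) * x \<in> ?F" using x by (rule Rgen.mu)
    moreover have "inverse x \<in> ?F"
    proof (cases "x = 0")
      case True then show ?thesis using \<open>0 \<in> ?F\<close> by simp
    next
      case False
      have eqi: "inverse x = x ^ (Q - 1) * (inverse x) ^ Q"
      proof -
        have "x ^ Q = x ^ (Q - 1) * x" using Qpos by (metis Suc_diff_1 power_Suc2)
        then show ?thesis using False by (simp add: power_inverse field_simps)
      qed
      have m: "x ^ (Q - 1) * (inverse x) ^ Q \<in> ?F" by (rule Rgen.mu[OF Rgen_pow[OF x] Rgen.pw])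
      then show ?thesis unfolding eqi[symmetric] .
    qed
    ultimately show "- x \<in> ?F \<and> inverse x \<in> ?F" by simp
  qed
  have "subfield_gen (k \<union> S) \<subseteq> ?F"
    unfolding subfield_gen_def by (rule Inter_lower) (simp only: mem_Collect_eq, intro conjI f1 f2 f3 f4 f5)
  then show ?thesis using gen by auto
qed

lemma finite_order:
  fixes D :: "'a::field \<Rightarrow> 'a" and S :: "'a set"
  assumes ch: "CHAR('a) > 0" and Q: "Q = CHAR('a) ^ N"
    and R: "Rgen Q S = UNIV" and fin: "finite S" and ad: "addi D" and ql: "qlin Q D"
  shows "\<exists>n. Ord (Suc n) D"
proof -
  define G :: "'a set" where "G = insert 1 S"
  have "finite G" "G \<noteq> {}" using fin by (auto simp: G_def)
  have "\<forall>g\<in>G. (comm g ^^ ((\<lambda>_. Q) g)) D = (\<lambda>_. 0)"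
    using comm_funpow_CHAR_pow[OF ch] comm_qlin[OF ql] Q by simp
  then have "OG G (sum (\<lambda>_. Q) G) D"
    using OG_budget[OF \<open>finite G\<close> \<open>G \<noteq> {}\<close>, of "\<lambda>_. Q" D] by simp
  then have "Ord (sum (\<lambda>_. Q) G) D"
    using OG_Ord[OF R _ ad ql] G_def by blast
  then have "Ord (Suc (sum (\<lambda>_. Q) G)) D" by (rule Ord_mono) simp
  then show ?thesis by blast
qed



lemma qlin_map_exists:
  fixes c :: "'a::field"
  assumes ch: "CHAR('a) > 0" and Q: "Q = CHAR('a) ^ N" and c: "c \<notin> range (\<lambda>x. x ^ Q)"
  shows "\<exists>D. addi D \<and> qlin Q D \<and> D c = 1 \<and> D 1 = 0"
proof -
  define s :: "'a \<Rightarrow> 'a \<Rightarrow> 'a" where "s a x = a ^ Q * x" for a x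
  have vs: "vector_space s"
  proof
    fix a b :: 'a and x y :: 'a
    show "s a (x + y) = s a x + s a y" by (simp add: s_def algebra_simps)
    show "s (a + b) x = s a x + s b x" using frob_add[OF ch, of a b N] Q by (simp add: s_def algebra_simps)
    show "s a (s b x) = s (a * b) x" by (simp add: s_def power_mult_distrib)
    show "s 1 x = x" by (simp add: s_def)
  qed
  interpret vs: vector_space s by (rule vs)
  interpret vsp: vector_space_pair s s by unfold_locales
  have c0: "c \<noteq> 0"
  proof
    assume "c = 0"
    then have "c = 0 ^ Q" using Q ch by simp
    then show False using c by blast
  qed
  have c1: "c \<noteq> 1"
  proof
    assume "c = 1"
    then have "c = 1 ^ Q" by simp
    then show False using c by blast
  qed
  have "vs.independent {c}" using c0 by (simp add: vs.independent_insert vs.span_empty)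
  moreover have "1 \<notin> vs.span {c}"
  proof
    assume "1 \<in> vs.span {c}"
    then obtain a where "1 = s a c" by (auto simp: vs.span_singleton)
    then have "1 = a ^ Q * c" by (simp add: s_def)
    then have "inverse (a ^ Q) = c" by (intro inverse_unique) simp
    then have "c = (inverse a) ^ Q" by (simp add: power_inverse)
    then show False using c by auto
  qed
  ultimately have ind: "vs.independent {1, c}" by (simp add: vs.independent_insert)
  define D where "D = vsp.construct {1, c} (\<lambda>b. if b = c then 1 else 0)"
  have lin: "Vector_Spaces.linear s s D" unfolding D_def by (rule vsp.linear_construct[OF ind])
  have "D c = 1" unfolding D_def by (subst vsp.construct_basis[OF ind]) auto
  moreover have "D 1 = 0" unfolding D_def by (subst vsp.construct_basis[OF ind]) (use c1 in auto)
  moreover have "addi D" unfolding addi_def using lin by (simp add: vsp.linear_add)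
  moreover have "qlin Q D" unfolding qlin_def using vsp.linear_scale[OF lin] by (simp add: s_def)
  ultimately show ?thesis by blast
qed



lemma uniform_order:
  assumes "finite G" "\<forall>g\<in>G. \<exists>n. Ord (Suc n) (g::'a::field \<Rightarrow> 'a)"
  shows "\<exists>M. \<forall>g\<in>G. Ord (Suc M) g"
  using assms
proof (induction G rule: finite_induct)
  case empty then show ?case by simp
next
  case (insert x F)
  then obtain M where M: "\<forall>g\<in>F. Ord (Suc M) g" by auto
  obtain n where n: "Ord (Suc n) x" using insert.prems by auto
  have "\<forall>g\<in>insert x F. Ord (Suc (max M n)) g"
    using M n Ord_mono by (metis insertE max.cobounded1 max.cobounded2 Suc_le_mono)
  then show ?case by blast
qed

lemma core_sub:
  "(perfect_core :: 'a::field set) \<subseteq> range (\<lambda>x::'a. x ^ (CHAR('a) ^ N))"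
  unfolding perfect_core_def by blast

theorem mainTheorem16:
  assumes "CHAR('a::field) > 0"
    and "fg_field_ext (perfect_core :: 'a set)"
    and "(perfect_core :: 'a set) \<noteq> UNIV"
  shows "\<not> fg_K_algebra (Diff (perfect_core :: 'a set))"
proof
  assume "fg_K_algebra (Diff (perfect_core :: 'a set))"
  then obtain G where G: "finite G" "G \<subseteq> Diff (perfect_core :: 'a set)"
      "K_alg_gen G = Diff (perfect_core :: 'a set)"
    unfolding fg_K_algebra_def by blast
  define k where "k = (perfect_core :: 'a set)"
  define p where "p = CHAR('a)"
  have ch: "CHAR('a) > 0" by fact
  obtain S :: "'a set" where S: "finite S" "subfield_gen (k \<union> S) = UNIV"
    using assms(2) unfolding fg_field_ext_def k_def by blast
  have "\<forall>g\<in>G. \<exists>n. Ord (Suc n) g"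
    using G(2) unfolding Diff_def Ord_def by blast
  then obtain M where M: "\<forall>g\<in>G. Ord (Suc M) g" using uniform_order G(1) by blast
  define q where "q = p ^ M"
  define E where "E = {X :: 'a \<Rightarrow> 'a. \<forall>c y. X (c ^ q * y) = c ^ q * X y}"
  have "f \<in> E" if "f \<in> K_alg_gen G" for f
    using that
  proof (induction f rule: K_alg_gen.induct)
    case (scal c) then show ?case by (simp add: E_def algebra_simps)
  next
    case (gen g) then show ?case
      using Diff_pow_lin[OF ch] M unfolding E_def q_def p_def by blast
  next
    case (add f g) then show ?case by (simp add: E_def algebra_simps)
  next
    case (comp f g) then show ?case by (simp add: E_def)
  qed
  then have DE: "Diff k \<subseteq> E" using G(3) k_def by blast
  obtain z where z: "z \<notin> k" using assms(3) k_def by blast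
  then obtain n where n: "z \<notin> range (\<lambda>x::'a. x ^ (p ^ n))"
    unfolding k_def perfect_core_def p_def by blast
  define Q where "Q = p ^ (M + n)"
  define c where "c = z ^ q"
  have cQ: "c \<notin> range (\<lambda>x. x ^ Q)"
  proof
    assume "c \<in> range (\<lambda>x. x ^ Q)"
    then obtain w where "c = w ^ Q" by blast
    then have "z ^ (p ^ M) = (w ^ (p ^ n)) ^ (p ^ M)"
      unfolding c_def q_def Q_def by (simp add: power_add power_mult[symmetric] mult.commute)
    then have "z = w ^ (p ^ n)" using frob_inj[OF ch] p_def by blast
    then show False using n by blast
  qed
  obtain D where D: "addi D" "qlin Q D" "D c = 1" "D 1 = 0"
    using qlin_map_exists[OF ch _ cQ] Q_def p_def by blast
  have kQ: "k \<subseteq> range (\<lambda>x. x ^ Q)" using core_sub k_def Q_def p_def by blast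
  have R: "Rgen Q S = UNIV" using Rgen_UNIV[OF ch _ kQ S(2)] Q_def p_def by blast
  obtain m where m: "Ord (Suc m) D" using finite_order[OF ch _ R S(1) D(1) D(2)] Q_def p_def by blast
  have "k_linear k D"
    unfolding k_linear_def
  proof (intro conjI ballI allI)
    fix x y show "D (x + y) = D x + D y" using D(1) by (simp add: addi_def)
  next
    fix a x assume "a \<in> k"
    then obtain w where "a = w ^ Q" using kQ by blast
    then show "D (a * x) = a * D x" using D(2) by (simp add: qlin_def)
  qed
  then have "D \<in> Diff k" using m unfolding Diff_def Ord_def by blast
  then have "D \<in> E" using DE by blast
  then have "D (z ^ q * 1) = z ^ q * D 1" unfolding E_def by blast
  then show False using D c_def by simp
qed


end
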